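(* Let $T$ be a tree and let $G$ be the simple graph obtained from the disjoint union of $T$ and an isolated vertex $u^*$ by adding $t$ edges joining $u^*$ to $t$ distinct vertices of $T$, where $1\le t\le v(T)$. Then $\phi(G)=\lfloor t/2\rfloor$.
   Context: $v(T)$ is the number of vertices of $T$. For a graph $G$, $\phi(G)$ is the maximum number of pairwise edge-disjoint cycles in $G$. *)

theory Defs
  imports Main
begin

definition simple_graph :: "'a set \<Rightarrow> 'a set set \<Rightarrow> bool" where
  "simple_graph V E \<longleftrightarrow> finite V \<and>
     (\<forall>e\<in>E. \<exists>x y. x \<in> V \<and> y \<in> V \<and> x \<noteq> y \<and> e = {x, y})"

definition is_cycle_list :: "'a set set \<Rightarrow> 'a list \<Rightarrow> bool" where
  "is_cycle_list E vs \<longleftrightarrow> 3 \<le> length vs \<and> distinct vs \<and>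
     (\<forall>i < length vs. {vs ! i, vs ! ((i + 1) mod length vs)} \<in> E)"

definition cycle_edges :: "'a list \<Rightarrow> 'a set set" where
  "cycle_edges vs = {{vs ! i, vs ! ((i + 1) mod length vs)} | i. i < length vs}"

definition cycles :: "'a set set \<Rightarrow> 'a set set set" where
  "cycles E = {cycle_edges vs | vs. is_cycle_list E vs}"

definition phi :: "'a set \<Rightarrow> 'a set set \<Rightarrow> nat" where
  "phi V E = Max {card C | C. C \<subseteq> cycles E \<and> pairwise disjnt C}"

definition graph_connected :: "'a set \<Rightarrow> 'a set set \<Rightarrow> bool" where
  "graph_connected V E \<longleftrightarrow>
     (\<forall>x\<in>V. \<forall>y\<in>V. (x, y) \<in> {(a, b). {a, b} \<in> E}\<^sup>*)"

definition is_tree :: "'a set \<Rightarrow> 'a set set \<Rightarrow> bool" where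
  "is_tree V E \<longleftrightarrow> simple_graph V E \<and> V \<noteq> {} \<and> graph_connected V E \<and> cycles E = {}"

end

theory Submission
  imports Defs
begin


fun wedges :: "'a list \<Rightarrow> 'a set set" where
  "wedges (x # y # r) = insert {x, y} (wedges (y # r))"
| "wedges _ = {}"

lemma wedges_append: "wedges (xs @ y # ys) = wedges (xs @ [y]) \<union> wedges (y # ys)"
proof (induction xs)
  case Nil then show ?case by simp
next
  case (Cons x xs) then show ?case by (cases xs) auto
qed

lemma wedges_rev: "wedges (rev w) = wedges w"
proof (induction w rule: wedges.induct)
  case (1 x y r)
  have "wedges (rev (x # y # r)) = wedges (rev r @ y # [x])" by simp
  also have "\<dots> = wedges (rev r @ [y]) \<union> wedges [y, x]" by (rule wedges_append)
  also have "\<dots> = wedges (y # r) \<union> {{y, x}}" using 1 by simp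
  finally show ?case by (auto simp: insert_commute)
qed auto

lemma wedges_nth: "Suc i < length w \<Longrightarrow> {w ! i, w ! Suc i} \<in> wedges w"
proof (induction w arbitrary: i rule: wedges.induct)
  case (1 x y r)
  then show ?case by (cases i) auto
qed auto

lemma wedges_split: "e \<in> wedges w \<Longrightarrow> \<exists>xs a b ys. w = xs @ a # b # ys \<and> e = {a, b}"
proof (induction w rule: wedges.induct)
  case (1 x y r)
  show ?case
  proof (cases "e = {x, y}")
    case True then show ?thesis by (intro exI[of _ "[]"]) auto
  next
    case False
    then obtain xs a b ys where "y # r = xs @ a # b # ys" "e = {a, b}" using 1 by auto
    then show ?thesis by (intro exI[of _ "x # xs"]) auto
  qed
qed auto

lemma set_wedges: "2 \<le> length w \<Longrightarrow> set w \<subseteq> \<Union> (wedges w)"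
proof (induction w rule: wedges.induct)
  case (1 x y r)
  then show ?case by (cases r) auto
qed auto

definition good_cfg :: "'a set set \<Rightarrow> 'a set \<Rightarrow> nat \<Rightarrow> 'a list set \<Rightarrow> bool" where
  "good_cfg E A k Ps \<longleftrightarrow> finite Ps \<and> card Ps = k \<and>
    (\<forall>P\<in>Ps. P \<noteq> [] \<and> hd P \<noteq> last P \<and> wedges P \<subseteq> E \<and> hd P \<in> A \<and> last P \<in> A) \<and>
    (\<forall>P\<in>Ps. \<forall>Q\<in>Ps. P \<noteq> Q \<longrightarrow> {hd P, last P} \<inter> {hd Q, last Q} = {})"

lemma walk_exists:
  assumes "(a, b) \<in> {(x, y). {x, y} \<in> E}\<^sup>*"
  shows "\<exists>w. w \<noteq> [] \<and> hd w = a \<and> last w = b \<and> wedges w \<subseteq> E"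
  using assms
proof (induction rule: converse_rtrancl_induct)
  case base
  then show ?case by (intro exI[of _ "[b]"]) auto
next
  case (step y z)
  then obtain w where w: "w \<noteq> []" "hd w = z" "last w = b" "wedges w \<subseteq> E" by auto
  then have "wedges (y # w) = insert {y, z} (wedges w)" by (cases w) auto
  then show ?case using w step by (intro exI[of _ "y # w"]) auto
qed

lemma cfg_exists:
  assumes conn: "graph_connected V E"
  shows "A \<subseteq> V \<Longrightarrow> finite A \<Longrightarrow> 2 * k \<le> card A \<Longrightarrow> \<exists>Ps. good_cfg E A k Ps"
proof (induction k arbitrary: A)
  case 0
  then show ?case by (intro exI[of _ "{}"]) (auto simp: good_cfg_def)
next
  case (Suc k)
  then have "2 \<le> card A" by simp
  then obtain a b where ab: "a \<in> A" "b \<in> A" "a \<noteq> b"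
    by (metis One_nat_def Suc_1 card_le_Suc_iff insertCI le_SucE numeral_le_one_iff semiring_norm(69))
  define A' where "A' = A - {a, b}"
  have cA': "card A' = card A - 2" using ab Suc.prems unfolding A'_def
    by (simp add: card_Diff_subset)
  have "\<exists>Ps. good_cfg E A' k Ps"
    by (rule Suc.IH) (use Suc.prems cA' in \<open>auto simp: A'_def\<close>)
  then obtain Ps where Ps: "good_cfg E A' k Ps" by auto
  obtain w where w: "w \<noteq> []" "hd w = a" "last w = b" "wedges w \<subseteq> E"
    using walk_exists[of a b E] conn ab Suc.prems unfolding graph_connected_def by blast
  have wn: "w \<notin> Ps" using Ps w unfolding good_cfg_def A'_def by auto
  show ?case
    using Ps w wn ab unfolding good_cfg_def A'_def
    by (intro exI[of _ "insert w Ps"]) auto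
qed



lemma recomb_core:
  assumes good: "good_cfg E A k Ps" and PQ: "P \<in> Ps" "Q \<in> Ps" "P \<noteq> Q"
    and Pd: "P = p1 @ a # b # p2" and Qd: "Q' = q1 @ a # b # q2"
    and hl: "{hd Q', last Q'} = {hd Q, last Q}" and wq: "wedges Q' = wedges Q"
    and lq: "length Q' = length Q"
  shows "\<exists>Ps'. good_cfg E A k Ps' \<and> sum length Ps' < sum length Ps"
proof -
  define W1 where "W1 = p1 @ a # rev q1"
  define W2 where "W2 = rev p2 @ b # q2"
  have Pn: "P \<noteq> []" "Q' \<noteq> []" using Pd Qd by auto
  have h1: "hd W1 = hd P" unfolding W1_def Pd by (cases p1) auto
  have l1: "last W1 = hd Q'" unfolding W1_def Qd by (cases q1) (auto simp: last_rev)
  have h2: "hd W2 = last P" unfolding W2_def Pd by (cases p2) (auto simp: hd_rev)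
  have l2: "last W2 = last Q'" unfolding W2_def Qd by (cases q2) auto
  have n12: "W1 \<noteq> []" "W2 \<noteq> []" unfolding W1_def W2_def by auto
  have len: "length W1 + length W2 + 2 = length P + length Q'"
    unfolding W1_def W2_def Pd Qd by simp
  have wP1: "wedges (p1 @ [a]) \<subseteq> wedges P" unfolding Pd using wedges_append[of p1 a "b # p2"] by auto
  have wP2: "wedges (b # p2) \<subseteq> wedges P" unfolding Pd using wedges_append[of "p1 @ [a]" b p2] by auto
  have wQ1: "wedges (q1 @ [a]) \<subseteq> wedges Q'" unfolding Qd using wedges_append[of q1 a "b # q2"] by auto
  have wQ2: "wedges (b # q2) \<subseteq> wedges Q'" unfolding Qd using wedges_append[of "q1 @ [a]" b q2] by auto
  have "wedges (a # rev q1) = wedges (q1 @ [a])" using wedges_rev[of "q1 @ [a]"] by simp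
  then have w1: "wedges W1 \<subseteq> wedges P \<union> wedges Q'"
    unfolding W1_def using wedges_append[of p1 a "rev q1"] wP1 wQ1 by auto
  have "wedges (rev p2 @ [b]) = wedges (b # p2)" using wedges_rev[of "b # p2"] by simp
  then have w2: "wedges W2 \<subseteq> wedges P \<union> wedges Q'"
    unfolding W2_def using wedges_append[of "rev p2" b q2] wP2 wQ2 by auto
  have gP: "P \<noteq> [] \<and> hd P \<noteq> last P \<and> wedges P \<subseteq> E \<and> hd P \<in> A \<and> last P \<in> A"
    using good PQ unfolding good_cfg_def by auto
  have gQ: "Q \<noteq> [] \<and> hd Q \<noteq> last Q \<and> wedges Q \<subseteq> E \<and> hd Q \<in> A \<and> last Q \<in> A"
    using good PQ unfolding good_cfg_def by auto
  have dPQ: "{hd P, last P} \<inter> {hd Q, last Q} = {}"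
    using good PQ unfolding good_cfg_def by auto
  have hQ': "hd Q' \<noteq> last Q'" "hd Q' \<in> {hd Q, last Q}" "last Q' \<in> {hd Q, last Q}"
    using hl gQ by (auto simp: doubleton_eq_iff)
  define R where "R = Ps - {P, Q}"
  have finPs: "finite Ps" "card Ps = k" using good unfolding good_cfg_def by auto
  have oth: "\<And>Z. Z \<in> R \<Longrightarrow> {hd Z, last Z} \<inter> {hd P, last P, hd Q, last Q} = {}"
    using good PQ unfolding good_cfg_def R_def by blast
  have W1R: "W1 \<notin> R" using oth h1 by fastforce
  have W2R: "W2 \<notin> R" using oth h2 by fastforce
  have W12: "W1 \<noteq> W2" using h1 h2 gP by auto
  have finR: "finite R" using finPs unfolding R_def by auto
  have "card {P, Q} \<le> card Ps" using finPs PQ by (intro card_mono) auto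
  then have cR: "card R + 2 = k" using finPs PQ unfolding R_def
    by (simp add: card_Diff_subset)
  have sPs: "sum length Ps = length P + length Q + sum length R"
  proof -
    have "sum length Ps = length P + sum length (Ps - {P})"
      using finPs PQ by (simp add: sum.remove)
    also have "sum length (Ps - {P}) = length Q + sum length (Ps - {P} - {Q})"
      using finPs PQ by (simp add: sum.remove)
    finally show ?thesis unfolding R_def by (simp add: Diff_insert2[symmetric] insert_commute)
  qed
  define Ps' where "Ps' = insert W1 (insert W2 R)"
  have sPs': "sum length Ps' = length W1 + length W2 + sum length R"
    unfolding Ps'_def using finR W1R W2R W12 by simp
  have "card Ps' = k" unfolding Ps'_def using finR W1R W2R W12 cR by simp
  moreover have "finite Ps'" unfolding Ps'_def using finR by simp
  moreover have "\<forall>X\<in>Ps'. X \<noteq> [] \<and> hd X \<noteq> last X \<and> wedges X \<subseteq> E \<and> hd X \<in> A \<and> last X \<in> A"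
  proof
    fix X assume "X \<in> Ps'"
    then consider "X = W1" | "X = W2" | "X \<in> R" unfolding Ps'_def by auto
    then show "X \<noteq> [] \<and> hd X \<noteq> last X \<and> wedges X \<subseteq> E \<and> hd X \<in> A \<and> last X \<in> A"
    proof cases
      case 1 then show ?thesis using n12 h1 l1 w1 gP gQ hQ' wq dPQ by auto
    next
      case 2 then show ?thesis using n12 h2 l2 w2 gP gQ hQ' wq dPQ by auto
    next
      case 3 then show ?thesis using good unfolding good_cfg_def R_def by auto
    qed
  qed
  moreover have "\<forall>X\<in>Ps'. \<forall>Y\<in>Ps'. X \<noteq> Y \<longrightarrow> {hd X, last X} \<inter> {hd Y, last Y} = {}"
  proof (intro ballI impI)
    fix X Y assume XY: "X \<in> Ps'" "Y \<in> Ps'" "X \<noteq> Y"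
    have e1: "{hd W1, last W1} \<subseteq> {hd P, last P, hd Q, last Q}" using h1 l1 hQ' by auto
    have e2: "{hd W2, last W2} \<subseteq> {hd P, last P, hd Q, last Q}" using h2 l2 hQ' by auto
    have e12: "{hd W1, last W1} \<inter> {hd W2, last W2} = {}"
      using h1 l1 h2 l2 hQ' gP dPQ by auto
    have sym: "\<And>B C. B \<inter> C = {} \<Longrightarrow> C \<inter> B = {}" by auto
    have oth1: "\<And>Z. Z \<in> R \<Longrightarrow> {hd Z, last Z} \<inter> {hd W1, last W1} = {}"
      using oth e1 by blast
    have oth2: "\<And>Z. Z \<in> R \<Longrightarrow> {hd Z, last Z} \<inter> {hd W2, last W2} = {}"
      using oth e2 by blast
    show "{hd X, last X} \<inter> {hd Y, last Y} = {}"
    proof (cases "X \<in> R \<and> Y \<in> R")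
      case True then show ?thesis using good XY unfolding good_cfg_def R_def by auto
    next
      case False
      then consider "X = W1" "Y = W2" | "X = W2" "Y = W1" | "X \<in> R" "Y \<in> {W1, W2}" | "Y \<in> R" "X \<in> {W1, W2}"
        using XY unfolding Ps'_def by auto
      then show ?thesis
        by cases (use e12 oth1[of X] oth2[of X] oth1[of Y] oth2[of Y] in auto)
    qed
  qed
  ultimately have "good_cfg E A k Ps'" unfolding good_cfg_def by blast
  moreover have "sum length Ps' < sum length Ps" using sPs sPs' len lq by simp
  ultimately show ?thesis by blast
qed


lemma replace1:
  assumes good: "good_cfg E A k Ps" and P: "P \<in> Ps"
    and P': "P' \<noteq> []" "hd P' = hd P" "last P' = last P" "wedges P' \<subseteq> E"
    "length P' < length P"
  shows "\<exists>Ps'. good_cfg E A k Ps' \<and> sum length Ps' < sum length Ps"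
proof -
  define R where "R = Ps - {P}"
  have fin: "finite Ps" "card Ps = k" using good unfolding good_cfg_def by auto
  have oth: "\<And>Z. Z \<in> R \<Longrightarrow> {hd Z, last Z} \<inter> {hd P, last P} = {}"
    using good P unfolding good_cfg_def R_def by blast
  have nR: "P' \<notin> R" using oth P' by fastforce
  have finR: "finite R" using fin unfolding R_def by auto
  have cR: "card R + 1 = k" using fin P unfolding R_def
    by (simp add: card_Diff_subset) (metis Suc_pred card_gt_0_iff empty_iff)
  have sPs: "sum length Ps = length P + sum length R"
    using fin P unfolding R_def by (simp add: sum.remove)
  define Ps' where "Ps' = insert P' R"
  have sPs': "sum length Ps' = length P' + sum length R"
    unfolding Ps'_def using finR nR by simp
  have gP: "P \<noteq> [] \<and> hd P \<noteq> last P \<and> wedges P \<subseteq> E \<and> hd P \<in> A \<and> last P \<in> A"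
    using good P unfolding good_cfg_def by auto
  have "good_cfg E A k Ps'"
    unfolding good_cfg_def
  proof (intro conjI)
    show "finite Ps'" unfolding Ps'_def using finR by simp
    show "card Ps' = k" unfolding Ps'_def using finR nR cR by simp
    show "\<forall>X\<in>Ps'. X \<noteq> [] \<and> hd X \<noteq> last X \<and> wedges X \<subseteq> E \<and> hd X \<in> A \<and> last X \<in> A"
      using good gP P' unfolding Ps'_def R_def good_cfg_def by auto
    show "\<forall>X\<in>Ps'. \<forall>Y\<in>Ps'. X \<noteq> Y \<longrightarrow> {hd X, last X} \<inter> {hd Y, last Y} = {}"
    proof (intro ballI impI)
      fix X Y assume XY: "X \<in> Ps'" "Y \<in> Ps'" "X \<noteq> Y"
      show "{hd X, last X} \<inter> {hd Y, last Y} = {}"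
      proof (cases "X \<in> R \<and> Y \<in> R")
        case True then show ?thesis using good XY unfolding good_cfg_def R_def by auto
      next
        case False
        then consider "X = P'" "Y \<in> R" | "Y = P'" "X \<in> R"
          using XY unfolding Ps'_def by auto
        then show ?thesis by cases (use oth[of X] oth[of Y] P' in auto)
      qed
    qed
  qed
  moreover have "sum length Ps' < sum length Ps" using sPs sPs' P' by simp
  ultimately show ?thesis by blast
qed

lemma cut_step:
  assumes good: "good_cfg E A k Ps" and P: "P \<in> Ps" and nd: "\<not> distinct P"
  shows "\<exists>Ps'. good_cfg E A k Ps' \<and> sum length Ps' < sum length Ps"
proof -
  obtain xs ys zs y where Pd: "P = xs @ [y] @ ys @ [y] @ zs" using not_distinct_decomp[OF nd] by blast
  define P' where "P' = xs @ y # zs"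
  have wP: "wedges P \<subseteq> E" using good P unfolding good_cfg_def by auto
  have "wedges P = wedges (xs @ [y]) \<union> wedges ((y # ys) @ y # zs)"
    unfolding Pd using wedges_append[of xs y "ys @ y # zs"] by simp
  also have "wedges ((y # ys) @ y # zs) = wedges ((y # ys) @ [y]) \<union> wedges (y # zs)"
    by (rule wedges_append)
  finally have "wedges P' \<subseteq> wedges P" unfolding P'_def using wedges_append[of xs y zs] by auto
  moreover have "hd P' = hd P" unfolding P'_def Pd by (cases xs) auto
  moreover have "last P' = last P" unfolding P'_def Pd by (cases zs) auto
  moreover have "length P' < length P" unfolding P'_def Pd by simp
  ultimately show ?thesis using replace1[OF good P, of P'] wP unfolding P'_def by auto
qed

lemma recomb_step:
  assumes good: "good_cfg E A k Ps" and PQ: "P \<in> Ps" "Q \<in> Ps" "P \<noteq> Q"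
    and e: "e \<in> wedges P" "e \<in> wedges Q"
  shows "\<exists>Ps'. good_cfg E A k Ps' \<and> sum length Ps' < sum length Ps"
proof -
  obtain p1 a b p2 where Pd: "P = p1 @ a # b # p2" "e = {a, b}" using wedges_split[OF e(1)] by blast
  obtain q1 c d q2 where Qd: "Q = q1 @ c # d # q2" "e = {c, d}" using wedges_split[OF e(2)] by blast
  have "(c = a \<and> d = b) \<or> (c = b \<and> d = a)" using Pd Qd by (auto simp: doubleton_eq_iff)
  then show ?thesis
  proof
    assume "c = a \<and> d = b"
    then show ?thesis using recomb_core[OF good PQ Pd(1), of Q q1 q2] Qd by auto
  next
    assume cd: "c = b \<and> d = a"
    have Qn: "Q \<noteq> []" using Qd by auto
    have rq: "rev Q = rev q2 @ a # b # rev q1" using Qd cd by simp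
    have hl: "{hd (rev Q), last (rev Q)} = {hd Q, last Q}" using Qn
      by (auto simp: hd_rev last_rev)
    show ?thesis by (rule recomb_core[OF good PQ Pd(1) rq hl]) (simp_all add: wedges_rev)
  qed
qed

lemma pairing:
  assumes conn: "graph_connected V E" and A: "A \<subseteq> V" "finite A" "2 * k \<le> card A"
  shows "\<exists>Ps. good_cfg E A k Ps \<and> (\<forall>P\<in>Ps. distinct P) \<and>
           (\<forall>P\<in>Ps. \<forall>Q\<in>Ps. P \<noteq> Q \<longrightarrow> wedges P \<inter> wedges Q = {})"
proof -
  obtain Ps0 where "good_cfg E A k Ps0" using cfg_exists[OF conn A] by blast
  then obtain Ps where good: "good_cfg E A k Ps"
    and min: "\<And>Ps'. good_cfg E A k Ps' \<Longrightarrow> sum length Ps \<le> sum length Ps'"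
    using ex_has_least_nat[of "good_cfg E A k" Ps0 "\<lambda>Ps. sum length Ps"] by blast
  have "\<forall>P\<in>Ps. distinct P"
  proof
    fix P assume "P \<in> Ps"
    show "distinct P"
    proof (rule ccontr)
      assume "\<not> distinct P"
      then show False using cut_step[OF good \<open>P \<in> Ps\<close>] min by force
    qed
  qed
  moreover have "\<forall>P\<in>Ps. \<forall>Q\<in>Ps. P \<noteq> Q \<longrightarrow> wedges P \<inter> wedges Q = {}"
  proof (intro ballI impI)
    fix P Q assume PQ: "P \<in> Ps" "Q \<in> Ps" "P \<noteq> Q"
    show "wedges P \<inter> wedges Q = {}"
    proof (rule ccontr)
      assume "wedges P \<inter> wedges Q \<noteq> {}"
      then obtain e where "e \<in> wedges P" "e \<in> wedges Q" by blast
      then show False using recomb_step[OF good PQ] min by force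
    qed
  qed
  ultimately show ?thesis using good by blast
qed



lemma cyc_edge:
  assumes "P \<noteq> []" "i < Suc (length P)"
  shows "{(u # P) ! i, (u # P) ! ((i + 1) mod Suc (length P))}
           \<in> insert {u, hd P} (insert {u, last P} (wedges P))"
proof (cases "i = length P")
  case True
  then have "(i + 1) mod Suc (length P) = 0" by simp
  moreover have "(u # P) ! i = last P" using True assms(1)
    by (cases i) (auto simp: last_conv_nth)
  ultimately show ?thesis by auto
next
  case False
  then have i: "i < length P" using assms by simp
  then have m: "(i + 1) mod Suc (length P) = i + 1" by simp
  show ?thesis
  proof (cases i)
    case 0
    then show ?thesis using m assms(1) by (simp add: hd_conv_nth)
  next
    case (Suc i')
    then have "{P ! i', P ! Suc i'} \<in> wedges P" using i by (intro wedges_nth) simp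
    then show ?thesis using m Suc by simp
  qed
qed

lemma cyc_sub:
  assumes "P \<noteq> []"
  shows "cycle_edges (u # P) \<subseteq> insert {u, hd P} (insert {u, last P} (wedges P))"
  using cyc_edge[OF assms] unfolding cycle_edges_def by auto

lemma cyc_is:
  assumes "2 \<le> length P" "distinct (u # P)" "wedges P \<subseteq> F" "{u, hd P} \<in> F" "{u, last P} \<in> F"
  shows "is_cycle_list F (u # P)"
proof -
  have Pn: "P \<noteq> []" using assms(1) by auto
  show ?thesis unfolding is_cycle_list_def
  proof (intro conjI allI impI)
    show "3 \<le> length (u # P)" using assms(1) by simp
    show "distinct (u # P)" by (rule assms(2))
    fix i assume "i < length (u # P)"
    then have "{(u # P) ! i, (u # P) ! ((i + 1) mod Suc (length P))}
           \<in> insert {u, hd P} (insert {u, last P} (wedges P))" using cyc_edge[OF Pn] by simp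
    then show "{(u # P) ! i, (u # P) ! ((i + 1) mod length (u # P))} \<in> F"
      using assms(3-5) by auto
  qed
qed

lemma cyc_two:
  assumes c: "c \<in> cycles (E \<union> U)" and noc: "cycles E = {}"
    and uU: "\<forall>e\<in>U. u \<in> e" and uE: "\<forall>e\<in>E. u \<notin> e"
  shows "\<exists>e1 e2. e1 \<noteq> e2 \<and> e1 \<in> c \<inter> U \<and> e2 \<in> c \<inter> U"
proof -
  obtain vs where vs: "c = cycle_edges vs" "is_cycle_list (E \<union> U) vs"
    using c unfolding cycles_def by auto
  define n where "n = length vs"
  have n3: "3 \<le> n" and dist: "distinct vs"
    and ed: "\<And>i. i < n \<Longrightarrow> {vs ! i, vs ! ((i + 1) mod n)} \<in> E \<union> U"
    using vs(2) unfolding is_cycle_list_def n_def by auto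
  have "u \<in> set vs"
  proof (rule ccontr)
    assume nu: "u \<notin> set vs"
    have "\<forall>i<n. {vs ! i, vs ! ((i + 1) mod n)} \<in> E"
    proof (intro allI impI)
      fix i assume i: "i < n"
      have "(i + 1) mod n < n" using n3 by simp
      then have "vs ! i \<in> set vs" "vs ! ((i + 1) mod n) \<in> set vs"
        using i unfolding n_def by (auto simp del: mod_less_divisor)
      then have "u \<notin> {vs ! i, vs ! ((i + 1) mod n)}" using nu by auto
      then show "{vs ! i, vs ! ((i + 1) mod n)} \<in> E" using ed[OF i] uU by auto
    qed
    then have "is_cycle_list E vs" using vs(2) unfolding is_cycle_list_def n_def by auto
    then have "cycle_edges vs \<in> cycles E" unfolding cycles_def by auto
    then show False using noc by auto
  qed
  then obtain j where j: "j < n" "vs ! j = u" unfolding n_def by (auto simp: in_set_conv_nth)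
  define j1 where "j1 = (j + 1) mod n"
  define j0 where "j0 = (j + n - 1) mod n"
  have j1e: "j1 = (if j = n - 1 then 0 else j + 1)"
    unfolding j1_def using j n3 by (cases "j = n - 1") auto
  have j0e: "j0 = (if j = 0 then n - 1 else j - 1)"
  proof (cases "j = 0")
    case True then show ?thesis unfolding j0_def using n3 by simp
  next
    case False
    then have "j + n - 1 = (j - 1) + n" by simp
    then have "(j + n - 1) mod n = (j - 1) mod n" by (simp only: mod_add_self2)
    then show ?thesis unfolding j0_def using False j by simp
  qed
  have j0s: "(j0 + 1) mod n = j" using j0e j n3 by auto
  have j0l: "j0 < n" "j1 < n" using j0e j1e j n3 by auto
  have neq: "j1 \<noteq> j" "j0 \<noteq> j" "j1 \<noteq> j0" using j0e j1e j n3 by auto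
  have v1: "vs ! j1 \<noteq> u" "vs ! j0 \<noteq> u" "vs ! j1 \<noteq> vs ! j0"
    using neq j0l j dist unfolding n_def by (auto simp: nth_eq_iff_index_eq)
  define e1 where "e1 = {vs ! j, vs ! j1}"
  define e0 where "e0 = {vs ! j0, vs ! ((j0 + 1) mod n)}"
  have "e1 \<in> c" unfolding e1_def vs(1) cycle_edges_def j1_def using j unfolding n_def by auto
  moreover have "e0 \<in> c" unfolding e0_def vs(1) cycle_edges_def using j0l unfolding n_def by auto
  moreover have "e1 \<in> E \<union> U" unfolding e1_def j1_def using ed j by auto
  moreover have "e0 \<in> E \<union> U" unfolding e0_def using ed j0l by auto
  moreover have "u \<in> e1" "u \<in> e0" unfolding e1_def e0_def using j j0s by auto
  moreover have "e1 \<noteq> e0" unfolding e1_def e0_def using j j0s v1 by (auto simp: doubleton_eq_iff)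
  ultimately show ?thesis using uE by blast
qed


lemma good_mem: "good_cfg E A k Ps \<Longrightarrow> P \<in> Ps \<Longrightarrow>
    P \<noteq> [] \<and> hd P \<noteq> last P \<and> wedges P \<subseteq> E \<and> hd P \<in> A \<and> last P \<in> A"
  unfolding good_cfg_def by blast

lemma good_ends: "good_cfg E A k Ps \<Longrightarrow> P \<in> Ps \<Longrightarrow> Q \<in> Ps \<Longrightarrow> P \<noteq> Q \<Longrightarrow>
    {hd P, last P} \<inter> {hd Q, last Q} = {}"
  unfolding good_cfg_def by blast

lemma len2_aux:
  assumes "P \<noteq> []" "hd P \<noteq> last P"
  shows "2 \<le> length P"
proof (cases P)
  case Nil then show ?thesis using assms by simp
next
  case (Cons x xs)
  then have "xs \<noteq> []" using assms by auto
  then show ?thesis using Cons by (cases xs) auto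
qed



theorem lemma2p2:
  fixes V :: "'a set" and E :: "'a set set" and u :: 'a and S :: "'a set" and t :: nat
  assumes "is_tree V E"
    and "u \<notin> V"
    and "S \<subseteq> V"
    and "card S = t"
    and "1 \<le> t" and "t \<le> card V"
  shows "phi (insert u V) (E \<union> (\<lambda>x. {u, x}) ` S) = t div 2"
proof -
  define U where "U = (\<lambda>x. {u, x}) ` S"
  define F where "F = E \<union> U"
  have sg: "simple_graph V E" and conn: "graph_connected V E" and noc: "cycles E = {}"
    using assms(1) unfolding is_tree_def by auto
  have finV: "finite V" using sg unfolding simple_graph_def by auto
  have Esub: "\<forall>e\<in>E. e \<subseteq> V" using sg unfolding simple_graph_def by auto
  have finE: "finite E"
  proof -
    have "E \<subseteq> Pow V" using Esub by auto
    moreover have "finite (Pow V)" using finV by simp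
    ultimately show ?thesis by (rule finite_subset)
  qed
  have finS: "finite S" using assms(3) finV by (rule finite_subset)
  have finU: "finite U" unfolding U_def using finS by simp
  have finF: "finite F" unfolding F_def using finE finU by simp
  have uE: "\<forall>e\<in>E. u \<notin> e" using Esub assms(2) by auto
  have uU: "\<forall>e\<in>U. u \<in> e" unfolding U_def by auto
  have cU: "card U \<le> t" unfolding U_def using assms(4) card_image_le[OF finS] by metis
  have cycF: "cycles F \<subseteq> Pow F"
    unfolding cycles_def cycle_edges_def is_cycle_list_def by auto
  have upper: "card C \<le> t div 2" if C: "C \<subseteq> cycles F" "pairwise disjnt C" for C
  proof -
    have "finite (Pow F)" using finF by simp
    have "C \<subseteq> Pow F" using C(1) cycF by (rule subset_trans)
    then have finC: "finite C" using \<open>finite (Pow F)\<close> by (rule finite_subset)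
    have two: "2 \<le> card (c \<inter> U)" if "c \<in> C" for c
    proof -
      have "c \<in> cycles (E \<union> U)" using that C(1) unfolding F_def by blast
      then obtain e1 e2 where "e1 \<noteq> e2" "e1 \<in> c \<inter> U" "e2 \<in> c \<inter> U"
        using cyc_two[OF _ noc uU uE] by blast
      then have "card {e1, e2} \<le> card (c \<inter> U)" using finU by (intro card_mono) auto
      then show ?thesis using \<open>e1 \<noteq> e2\<close> by simp
    qed
    have "card C * 2 \<le> (\<Sum>c\<in>C. card (c \<inter> U))"
      using sum_bounded_below[of C 2 "\<lambda>c. card (c \<inter> U)"] two by simp
    also have "\<dots> = card (\<Union>c\<in>C. c \<inter> U)"
      by (rule card_UN_disjoint[symmetric])
         (use finC finU C(2) in \<open>auto simp: pairwise_def disjnt_def\<close>)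
    also have "\<dots> \<le> card U" using finU by (intro card_mono) auto
    finally show ?thesis using cU by simp
  qed
  define k where "k = t div 2"
  obtain Ps where good: "good_cfg E S k Ps" and dist: "\<forall>P\<in>Ps. distinct P"
    and disj: "\<forall>P\<in>Ps. \<forall>Q\<in>Ps. P \<noteq> Q \<longrightarrow> wedges P \<inter> wedges Q = {}"
    using pairing[OF conn assms(3) finS, of k] assms(4) unfolding k_def by auto
  have gP: "\<And>P. P \<in> Ps \<Longrightarrow> P \<noteq> [] \<and> hd P \<noteq> last P \<and> wedges P \<subseteq> E \<and> hd P \<in> S \<and> last P \<in> S"
    using good_mem[OF good] by blast
  have ends: "\<And>P Q. P \<in> Ps \<Longrightarrow> Q \<in> Ps \<Longrightarrow> P \<noteq> Q \<Longrightarrow> {hd P, last P} \<inter> {hd Q, last Q} = {}"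
    using good_ends[OF good] by blast
  have len2: "2 \<le> length P" if "P \<in> Ps" for P
    using gP[OF that] len2_aux by blast
  have nu: "u \<notin> set P" if "P \<in> Ps" for P
  proof -
    have s1: "set P \<subseteq> \<Union> (wedges P)" by (rule set_wedges[OF len2[OF that]])
    have "wedges P \<subseteq> E" using gP[OF that] by blast
    then have "\<Union> (wedges P) \<subseteq> V" using Esub by blast
    then show ?thesis using s1 assms(2) by blast
  qed
  define C where "C = (\<lambda>P. cycle_edges (u # P)) ` Ps"
  have sub: "\<And>P. P \<in> Ps \<Longrightarrow> cycle_edges (u # P) \<subseteq> insert {u, hd P} (insert {u, last P} (wedges P))"
  proof -
    fix P assume "P \<in> Ps"
    then have "P \<noteq> []" using gP by blast
    then show "cycle_edges (u # P) \<subseteq> insert {u, hd P} (insert {u, last P} (wedges P))"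
      by (rule cyc_sub)
  qed
  have CF: "C \<subseteq> cycles F"
  proof
    fix c assume "c \<in> C"
    then obtain P where P: "P \<in> Ps" "c = cycle_edges (u # P)" unfolding C_def by blast
    have g: "P \<noteq> [] \<and> hd P \<noteq> last P \<and> wedges P \<subseteq> E \<and> hd P \<in> S \<and> last P \<in> S"
      by (rule gP[OF P(1)])
    have d: "distinct (u # P)" using dist P(1) nu[OF P(1)] by simp
    have w: "wedges P \<subseteq> F" using g unfolding F_def by blast
    have h: "{u, hd P} \<in> F" using g unfolding F_def U_def by blast
    have l: "{u, last P} \<in> F" using g unfolding F_def U_def by blast
    have "is_cycle_list F (u # P)" by (rule cyc_is[OF len2[OF P(1)] d w h l])
    then show "c \<in> cycles F" unfolding cycles_def P(2) by blast
  qed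
  have doub: "\<And>x y. x \<noteq> u \<Longrightarrow> y \<noteq> u \<Longrightarrow> {u, x} = {u, y} \<Longrightarrow> x = y"
    by (auto simp: doubleton_eq_iff)
  have inter: "cycle_edges (u # P) \<inter> cycle_edges (u # Q) = {}"
    if PQ: "P \<in> Ps" "Q \<in> Ps" "P \<noteq> Q" for P Q
  proof (rule ccontr)
    assume "cycle_edges (u # P) \<inter> cycle_edges (u # Q) \<noteq> {}"
    then obtain e where "e \<in> cycle_edges (u # P)" "e \<in> cycle_edges (u # Q)" by blast
    then have e1: "e \<in> insert {u, hd P} (insert {u, last P} (wedges P))"
      and e2: "e \<in> insert {u, hd Q} (insert {u, last Q} (wedges Q))"
      using sub[OF PQ(1)] sub[OF PQ(2)] by blast+
    have gp: "P \<noteq> [] \<and> hd P \<noteq> last P \<and> wedges P \<subseteq> E \<and> hd P \<in> S \<and> last P \<in> S"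
      by (rule gP[OF PQ(1)])
    have gq: "Q \<noteq> [] \<and> hd Q \<noteq> last Q \<and> wedges Q \<subseteq> E \<and> hd Q \<in> S \<and> last Q \<in> S"
      by (rule gP[OF PQ(2)])
    have nP: "hd P \<noteq> u" "last P \<noteq> u" using nu[OF PQ(1)] gp by auto
    have nQ: "hd Q \<noteq> u" "last Q \<noteq> u" using nu[OF PQ(2)] gq by auto
    have wP: "\<And>x. {u, x} \<notin> wedges P" using gp uE by blast
    have wQ: "\<And>x. {u, x} \<notin> wedges Q" using gq uE by blast
    have E4: "{hd P, last P} \<inter> {hd Q, last Q} = {}" using ends PQ by blast
    have wd: "wedges P \<inter> wedges Q = {}" using disj PQ by blast
    consider "e = {u, hd P}" | "e = {u, last P}" | "e \<in> wedges P" using e1 by blast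
    then show False
    proof cases
      case 1
      then show False using e2 wQ[of "hd P"] doub[of "hd P" "hd Q"] doub[of "hd P" "last Q"] E4 nP nQ
        by auto
    next
      case 2
      then show False using e2 wQ[of "last P"] doub[of "last P" "hd Q"] doub[of "last P" "last Q"] E4 nP nQ
        by auto
    next
      case 3
      then show False using e2 wP[of "hd Q"] wP[of "last Q"] wd by auto
    qed
  qed
  have inj: "inj_on (\<lambda>P. cycle_edges (u # P)) Ps"
  proof (rule inj_onI, rule ccontr)
    fix P Q assume PQ: "P \<in> Ps" "Q \<in> Ps" "cycle_edges (u # P) = cycle_edges (u # Q)" "P \<noteq> Q"
    have "{(u # P) ! 0, (u # P) ! ((0 + 1) mod length (u # P))} \<in> cycle_edges (u # P)"
      unfolding cycle_edges_def by (rule CollectI, rule exI[of _ 0]) simp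
    moreover have "(0 + 1) mod length (u # P) = 1" using len2[OF PQ(1)] by (cases P) auto
    moreover have "P \<noteq> []" using gP[OF PQ(1)] by blast
    ultimately have "{u, hd P} \<in> cycle_edges (u # P)" by (simp add: hd_conv_nth)
    then show False using inter[OF PQ(1,2,4)] PQ(3) by blast
  qed
  have "card Ps = k" using good unfolding good_cfg_def by blast
  then have cC: "card C = k" unfolding C_def using card_image[OF inj] by simp
  have pC: "pairwise disjnt C"
  proof (rule pairwiseI)
    fix c d assume cd: "c \<in> C" "d \<in> C" "c \<noteq> d"
    then obtain P Q where "P \<in> Ps" "Q \<in> Ps" "c = cycle_edges (u # P)" "d = cycle_edges (u # Q)"
      unfolding C_def by blast
    moreover then have "P \<noteq> Q" using cd by blast
    ultimately show "disjnt c d" unfolding disjnt_def using inter by blast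
  qed
  define M where "M = {card C | C. C \<subseteq> cycles F \<and> pairwise disjnt C}"
  have Mle: "\<And>x. x \<in> M \<Longrightarrow> x \<le> k"
  proof -
    fix x assume "x \<in> M"
    then obtain C' where "x = card C'" "C' \<subseteq> cycles F" "pairwise disjnt C'" unfolding M_def by blast
    then show "x \<le> k" using upper unfolding k_def by blast
  qed
  have "M \<subseteq> {..k}" using Mle by blast
  then have finM: "finite M" by (rule finite_subset) simp
  have kM: "k \<in> M" unfolding M_def using CF pC cC by blast
  have "Max M = k" by (rule Max_eqI[OF finM Mle kM])
  then show ?thesis unfolding phi_def M_def F_def U_def k_def by simp
qed

end
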